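(* For every square-free integer $m>1$ with $m\ne 6$, $$ \gcd(m,\varphi(m))\le m\exp\left(-\sqrt{\log 2\,\log m}\right). $$
   Context: $\varphi$ denotes Euler's totient function. *)

theory Defs
  imports Complex_Main "HOL-Number_Theory.Number_Theory" "HOL-Computational_Algebra.Squarefree"
begin

end

theory Submission
  imports Defs
begin

lemma primes_prod_dvd:
  fixes N :: nat
  assumes "finite S" "\<forall>p\<in>S. prime p \<and> p dvd N"
  shows "\<Prod>S dvd N"
  using assms
proof (induction S rule: finite_induct)
  case empty then show ?case by simp
next
  case (insert x S)
  have "coprime (\<Prod>S) x"
    by (rule prod_coprime_left) (use insert in \<open>auto intro: primes_coprime\<close>)
  then have "\<Prod>S * x dvd N" using insert by (intro divides_mult) auto
  then show ?case using insert by (simp add: mult.commute)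
qed

lemma sqf_mult1:
  fixes n :: nat
  assumes "squarefree n" "p \<in> prime_factors n"
  shows "multiplicity p n = 1"
  using assms squarefree_factorial_semiring' by (metis not_squarefree_0)

lemma sqf_prod:
  fixes n :: nat
  assumes "squarefree n"
  shows "\<Prod>(prime_factors n) = n"
proof -
  have n0: "n > 0" using assms by (metis gr0I not_squarefree_0)
  have "n = (\<Prod>p\<in>prime_factors n. p ^ multiplicity p n)"
    using n0 by (rule prime_factorization_nat)
  also have "\<dots> = \<Prod>(prime_factors n)"
    by (rule prod.cong) (use sqf_mult1[OF assms] in auto)
  finally show ?thesis by simp
qed

lemma sqf_tot:
  fixes n :: nat
  assumes "squarefree n"
  shows "totient n = (\<Prod>p\<in>prime_factors n. p - 1)"
proof -
  have n0: "n > 0" using assms by (metis gr0I not_squarefree_0)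
  show ?thesis unfolding totient_formula1[OF n0]
    by (rule prod.cong) (use sqf_mult1[OF assms] in auto)
qed


lemma nat_part:
  fixes m :: nat
  assumes sq: "squarefree m" and m1: "m > 1" and m6: "m \<noteq> 6"
  shows "\<exists>g d. gcd m (totient m) = g \<and> m = g * d \<and>
     ((g = 1 \<and> d \<ge> 2) \<or> (\<exists>k. 2^k * g \<le> d^(k+1) \<and> 2^(k+2) \<le> d+1 \<and> (k \<ge> 1 \<or> d \<ge> 4)))"
proof -
  define A where "A = prime_factors m"
  define tot where "tot = totient m"
  define B where "B = {p\<in>A. p dvd tot}"
  define C where "C = A - B"
  define g where "g = \<Prod>B"
  define d where "d = \<Prod>C"
  have finA: "finite A" unfolding A_def by simp
  have finB: "finite B" "finite C" using finA unfolding B_def C_def by auto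
  have primeA: "\<And>q. q \<in> A \<Longrightarrow> prime q" unfolding A_def by auto
  have hm: "m = \<Prod>A" unfolding A_def using sqf_prod[OF sq] by simp
  have htot: "tot = (\<Prod>q\<in>A. q - 1)" unfolding A_def tot_def using sqf_tot[OF sq] by simp
  have F4: "\<exists>q\<in>A. p dvd q - 1 \<and> ((p = 2 \<and> 3 \<le> q) \<or> (odd p \<and> 2*p+1 \<le> q))" if pB: "p \<in> B" for p
  proof -
    have pp: "prime p" using pB primeA unfolding B_def by auto
    have "p dvd (\<Prod>q\<in>A. q - 1)" using pB htot unfolding B_def by auto
    then obtain q where qA: "q \<in> A" and pq: "p dvd q - 1"
      using prime_dvd_prod_iff[OF finA pp] by auto
    have q2: "q \<ge> 2" using primeA[OF qA] prime_ge_2_nat by blast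
    have p2: "p \<ge> 2" using pp prime_ge_2_nat by blast
    have "p \<le> q - 1" using pq q2 by (intro dvd_imp_le) auto
    then have pltq: "p < q" using q2 by linarith
    show ?thesis
    proof (cases "p = 2")
      case True
      then show ?thesis using qA pq pltq by auto
    next
      case False
      then have op: "odd p" using pp p2 prime_odd_nat by simp
      have "q > 2" using pltq p2 by simp
      then have oq: "odd q" using prime_odd_nat primeA[OF qA] by simp
      obtain k where k: "q - 1 = p * k" using pq by auto
      have "even (q - 1)" using oq q2 by presburger
      then have "even (p * k)" by (simp only: k)
      then have "even k" using op by simp
      moreover have "k \<noteq> 0"
      proof
        assume "k = 0"
        then have "q - 1 = 0" using k by simp
        then show False using q2 by simp
      qed
      ultimately have "k \<ge> 2" by presburger
      then have "q - 1 \<ge> p * 2" using k by simp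
      then have "2*p+1 \<le> q" using q2 by linarith
      then show ?thesis using qA pq op by auto
    qed
  qed
  have Ane: "A \<noteq> {}"
  proof
    assume "A = {}"
    then have "m = 1" using hm by simp
    then show False using m1 by simp
  qed
  define P where "P = Max A"
  have PA: "P \<in> A" unfolding P_def using finA Ane by simp
  have PC: "P \<in> C"
  proof (rule ccontr)
    assume "P \<notin> C"
    then have "P \<in> B" using PA unfolding C_def by auto
    then obtain q where "q \<in> A" "2 * P + 1 \<le> q \<or> 3 \<le> q \<and> P = 2" using F4 by blast
    moreover have "q \<le> P" using \<open>q \<in> A\<close> finA unfolding P_def by simp
    ultimately show False by auto
  qed
  have primeC: "\<And>q. q \<in> C \<Longrightarrow> prime q" using primeA unfolding C_def by auto
  have dpos: "d > 0" unfolding d_def using primeC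
    by (intro prod_pos) (simp add: primeC prime_gt_0_nat)
  have Pd: "P \<le> d"
  proof (rule dvd_imp_le)
    show "P dvd d" unfolding d_def using finB(2) PC by (rule dvd_prodI)
  qed (rule dpos)
  have qd: "q \<le> d" if "q \<in> A" for q
  proof -
    have "q \<le> P" unfolding P_def using finA that by simp
    then show ?thesis using Pd by simp
  qed
  have P2: "P \<ge> 2" using primeA[OF PA] by (rule prime_ge_2_nat)
  have d2: "d \<ge> 2" using Pd P2 by simp
  have ABC: "A = B \<union> C" "B \<inter> C = {}" unfolding B_def C_def by auto
  have mgd: "m = g * d" unfolding hm g_def d_def ABC(1)
    using finB ABC(2) by (simp add: prod.union_disjoint)
  have gdvdm: "g dvd m" unfolding hm g_def using finA by (intro prod_dvd_prod_subset) (auto simp: B_def)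
  have gdvdt: "g dvd tot" unfolding g_def using finB(1) primeA
    by (intro primes_prod_dvd) (auto simp: B_def)
  have hgcd: "gcd m tot = g"
  proof (rule dvd_antisym)
    show "g dvd gcd m tot" using gdvdm gdvdt by simp
  next
    define h where "h = gcd m tot"
    have h0: "h \<noteq> 0" unfolding h_def using m1 by simp
    have sqh: "squarefree h" unfolding h_def using sq by (rule squarefree_mono[rotated]) simp
    have "prime_factors h \<subseteq> B"
    proof
      fix p assume "p \<in> prime_factors h"
      then have pp: "prime p" and pd: "p dvd h" by auto
      then have "p dvd m" "p dvd tot" unfolding h_def by auto
      then show "p \<in> B" unfolding B_def A_def using pp m1 by (auto intro: prime_factorsI)
    qed
    then have "\<Prod>(prime_factors h) dvd \<Prod>B" using finB(1) by (intro prod_dvd_prod_subset)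
    then show "gcd m tot dvd g" using sqf_prod[OF sqh] unfolding g_def h_def by simp
  qed
  define G where "G = (\<lambda>t::nat. \<Prod>{p\<in>B. t \<le> p})"
  have finBt: "finite {p\<in>B. t \<le> p}" for t using finB(1) by simp
  have primeB: "\<And>p. p \<in> B \<Longrightarrow> prime p" using primeA unfolding B_def by auto
  have Gpos: "G t \<ge> 1" for t unfolding G_def
    by (rule prod_ge_1) (auto dest: primeB prime_gt_0_nat simp: Suc_le_eq)
  have step: "G t \<le> d * G (2*t+1) \<and> (t \<ge> 3 \<longrightarrow> 2 * G t \<le> d * G (2*t+1))"
    if tt: "t = 1 \<or> (odd t \<and> t \<ge> 3)" for t
  proof -
    define Q where "Q = {q\<in>A. 2*t+1 \<le> q}"
    have finQ: "finite Q" using finA unfolding Q_def by simp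
    have hQ: "\<exists>q\<in>Q. p dvd q - 1" if "p \<in> B" "t \<le> p" for p
    proof -
      obtain q where q: "q \<in> A" "p dvd q - 1" "(p = 2 \<and> 3 \<le> q) \<or> (odd p \<and> 2*p+1 \<le> q)"
        using F4[OF \<open>p \<in> B\<close>] by blast
      have "2*t+1 \<le> q" using q(3) tt that(2) by auto
      then show ?thesis using q unfolding Q_def by auto
    qed
    have Gdvd: "G t dvd (\<Prod>q\<in>Q. q - 1)" unfolding G_def
    proof (rule primes_prod_dvd[OF finBt], safe)
      fix p assume "p \<in> B" "t \<le> p"
      then show "prime p" using primeB by simp
      obtain q where "q \<in> Q" "p dvd q - 1" using hQ[OF \<open>p \<in> B\<close> \<open>t \<le> p\<close>] by blast
      then show "p dvd (\<Prod>q\<in>Q. q - 1)" using finQ by (meson dvd_prodI dvd_trans)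
    qed
    have Q2: "\<And>q. q \<in> Q \<Longrightarrow> q \<ge> 2" unfolding Q_def using primeA prime_ge_2_nat by auto
    have Ppos: "(\<Prod>q\<in>Q. q - 1) > 0" using Q2 by (intro prod_pos) (metis Suc_1 Suc_le_lessD zero_less_diff)
    have QBC: "Q = (Q \<inter> B) \<union> (Q \<inter> C)" using ABC unfolding Q_def by auto
    have QB: "Q \<inter> B = {p\<in>B. 2*t+1 \<le> p}" unfolding Q_def B_def by auto
    have e1: "(\<Prod>q\<in>Q. q - 1) \<le> (\<Prod>q\<in>Q. q)" by (rule prod_mono) auto
    have e2: "(\<Prod>q\<in>Q. q) = \<Prod>(Q \<inter> B) * \<Prod>(Q \<inter> C)"
      using finQ ABC(2) by (subst QBC) (subst prod.union_disjoint, auto)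
    have e3: "\<Prod>(Q \<inter> C) \<le> d" unfolding d_def using finB(2) dpos
      by (intro dvd_imp_le prod_dvd_prod_subset) (auto simp: d_def)
    have main: "(\<Prod>q\<in>Q. q - 1) \<le> G (2*t+1) * d"
      using e1 e2 e3 QB unfolding G_def by (metis le_trans mult_le_mono2)
    have c1: "G t \<le> d * G (2*t+1)" using dvd_imp_le[OF Gdvd Ppos] main by (simp add: mult.commute)
    have c2: "2 * G t \<le> d * G (2*t+1)" if t3: "t \<ge> 3"
    proof (cases "{p\<in>B. t \<le> p} = {}")
      case True
      then have "G t = 1" unfolding G_def by (simp only: prod.empty)
      then show ?thesis using d2 Gpos[of "2*t+1"] by (metis mult_le_mono)
    next
      case False
      then obtain p where p: "p \<in> B" "t \<le> p" by auto
      obtain q where q: "q \<in> Q" "p dvd q - 1" using hQ[OF p] by blast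
      have "q > 2" using q(1) t3 unfolding Q_def by auto
      then have "odd q" using prime_odd_nat primeA q(1) unfolding Q_def by auto
      then have "2 dvd q - 1" using Q2[OF q(1)] by presburger
      then have two: "2 dvd (\<Prod>q\<in>Q. q - 1)" using q(1) finQ by (meson dvd_prodI dvd_trans)
      have "\<not> 2 dvd G t"
      proof
        assume "2 dvd G t"
        then obtain p' where "p' \<in> {p\<in>B. t \<le> p}" "2 dvd p'"
          unfolding G_def using prime_dvd_prod_iff[OF finBt[of t], of "2::nat" "\<lambda>x. x"] by auto
        then have "prime p'" "p' \<ge> 3" "even p'" using primeB t3 by auto
        then show False using prime_odd_nat by force
      qed
      then have "coprime 2 (G t)" by (intro prime_imp_coprime) auto
      then have "2 * G t dvd (\<Prod>q\<in>Q. q - 1)" using two Gdvd by (rule divides_mult[rotated 2])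
      then show ?thesis using dvd_imp_le[OF _ Ppos] main by (metis le_trans mult.commute)
    qed
    show ?thesis using c1 c2 by blast
  qed
  have iter: "2^k * G 3 \<le> d^k * G (2^(k+2) - 1)" for k
  proof (induction k)
    case 0 then show ?case by simp
  next
    case (Suc k)
    define t where "t = 2^(k+2) - (1::nat)"
    have t4': "(2::nat)^(k+2) \<ge> 2^2" by (rule power_increasing) simp_all
    then have t4: "2^(k+2) \<ge> (4::nat)" by simp
    define x where "x = (2::nat)^(k+2)"
    have x4: "x \<ge> 4" using t4 unfolding x_def .
    have xe: "even x" unfolding x_def by simp
    have tx: "t = x - 1" unfolding t_def x_def ..
    have tt: "odd t \<and> t \<ge> 3" using x4 xe tx by presburger
    have "2^(Suc k + 2) = 2 * x" unfolding x_def by simp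
    then have "2*t+1 = 2^(Suc k + 2) - 1" using tx x4 by simp
    then have st: "2 * G t \<le> d * G (2^(Suc k + 2) - 1)" using step[of t] tt by auto
    have "2^(Suc k) * G 3 = 2 * (2^k * G 3)" by simp
    also have "\<dots> \<le> 2 * (d^k * G t)" using Suc.IH unfolding t_def by simp
    also have "\<dots> = d^k * (2 * G t)" by simp
    also have "\<dots> \<le> d^k * (d * G (2^(Suc k + 2) - 1))" using st by simp
    also have "\<dots> = d^(Suc k) * G (2^(Suc k + 2) - 1)" by (simp only: power_Suc mult.assoc mult.commute mult.left_commute)
    finally show ?case .
  qed
  have vanish: "G t = 1" if "t \<ge> 3" "d < 2*t+1" for t
  proof -
    have "{p\<in>B. t \<le> p} = {}"
    proof (rule ccontr)
      assume "{p\<in>B. t \<le> p} \<noteq> {}"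
      then obtain p where p: "p \<in> B" "t \<le> p" by auto
      obtain q where q: "q \<in> A" "(p = 2 \<and> 3 \<le> q) \<or> (odd p \<and> 2*p+1 \<le> q)" using F4[OF p(1)] by blast
      have "q \<le> d" using qd[OF q(1)] .
      then show False using q(2) p(2) that by auto
    qed
    then show ?thesis unfolding G_def by (simp only: prod.empty)
  qed
  have G1: "G 1 = g" unfolding G_def g_def using primeB prime_ge_1_nat
    by (intro arg_cong[where f=Prod]) auto
  show ?thesis
  proof (cases "B = {}")
    case True
    then have "g = 1" unfolding g_def by simp
    then show ?thesis using hgcd mgd d2 unfolding tot_def by auto
  next
    case False
    then obtain p where pB: "p \<in> B" by auto
    obtain q where q: "q \<in> A" "(p = 2 \<and> 3 \<le> q) \<or> (odd p \<and> 2*p+1 \<le> q)" using F4[OF pB] by blast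
    have "p \<ge> 2" using primeB[OF pB] prime_ge_2_nat by blast
    then have d3: "d \<ge> 3" using qd[OF q(1)] q(2) by auto
    have dn3: "d \<noteq> 3"
    proof
      assume d3': "d = 3"
      have "B \<subseteq> {2}"
      proof
        fix p' assume p': "p' \<in> B"
        obtain q' where q': "q' \<in> A" "(p' = 2 \<and> 3 \<le> q') \<or> (odd p' \<and> 2*p'+1 \<le> q')" using F4[OF p'] by blast
        have "p' \<ge> 2" using primeB[OF p'] prime_ge_2_nat by blast
        then show "p' \<in> {2}" using qd[OF q'(1)] q'(2) d3' by auto
      qed
      then have "B = {2}" using pB by auto
      then have "g = 2" unfolding g_def by simp
      then have "m = 6" using mgd d3' by simp
      then show False using m6 by simp
    qed
    obtain n where n: "2^n \<le> d+1" "d+1 < 2^(n+1)"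
      using ex_power_ivl1[of 2 "d+1"] by auto
    have n2: "n \<ge> 2"
    proof (rule ccontr)
      assume "\<not> n \<ge> 2"
      then have "n+1 \<le> 2" by simp
      then have "(2::nat)^(n+1) \<le> 2^2" by (rule power_increasing) simp
      then show False using n(2) d3 by simp
    qed
    define k where "k = n - 2"
    have nk: "n = k + 2" unfolding k_def using n2 by simp
    have "G (2^(k+2) - 1) = 1"
    proof (rule vanish)
      have "(2::nat)^(k+2) \<ge> 2^2" by (rule power_increasing) simp_all
      then have f4: "(2::nat)^(k+2) \<ge> 4" by simp
      then show "2^(k+2) - 1 \<ge> (3::nat)" by linarith
      have "(2::nat)^(n+1) = 2 * 2^(k+2)" unfolding nk by simp
      then show "d < 2 * (2 ^ (k + 2) - 1) + 1" using n(2) f4 by simp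
    qed
    then have i2: "2^k * G 3 \<le> d^k" using iter[of k] by simp
    have "G 1 \<le> d * G 3" using step[of 1] by simp
    then have "2^k * g \<le> 2^k * (d * G 3)" using G1 by simp
    also have "\<dots> = d * (2^k * G 3)" by simp
    also have "\<dots> \<le> d * d^k" using i2 by simp
    finally have "2^k * g \<le> d^(k+1)" by simp
    moreover have "2^(k+2) \<le> d + 1" using n(1) nk by simp
    moreover have "k \<ge> 1 \<or> d \<ge> 4" using d3 dn3 by auto
    ultimately show ?thesis using hgcd mgd unfolding tot_def by blast
  qed
qed

lemma ln74: "4 * ln (2::real) \<le> 5 * ln (7/4)"
proof -
  have 1: "ln ((2::real)^4) \<le> ln ((7/4)^5)" by (subst ln_le_cancel_iff) (simp_all add: power_divide)
  have 2: "ln ((2::real)^4) = 4 * ln 2" by (subst ln_realpow) simp_all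
  have 3: "ln ((7/4::real)^5) = 5 * ln (7/4)" by (subst ln_realpow) simp_all
  show ?thesis using 1 2 3 by linarith
qed

lemma quad:
  fixes a L e :: real and k :: nat
  assumes a: "a > 0" and e: "L = (k+1)*a + e" and h: "(k \<ge> 1 \<and> 5*e \<ge> 4*a) \<or> e \<ge> a"
  shows "a * ((k+2)*L - k*a) \<le> L^2"
proof -
  have id: "L^2 - a * ((k+2)*L - k*a) = e^2 + a*k*e - a^2" unfolding e by (simp add: algebra_simps power2_eq_square)
  have "e^2 + a*k*e - a^2 \<ge> 0"
  proof (cases "k \<ge> 1 \<and> 5*e \<ge> 4*a")
    case True
    then have e0: "e \<ge> 0" "e \<ge> 4/5*a" using a by auto
    have ae0: "a * e \<ge> 0" using a e0 by simp
    have "a*e*1 \<le> a*e*real k" using True ae0 by (intro mult_left_mono) auto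
    then have ake: "a*k*e \<ge> a*e" by (simp add: algebra_simps)
    have "a * (4/5*a) \<le> a * e" using e0 a by (intro mult_left_mono) auto
    then have ae: "a*e \<ge> 4/5 * a^2" by (simp add: power2_eq_square)
    have "e^2 \<ge> (4/5*a)^2" using e0 a by (intro power_mono) auto
    moreover have "(4/5*a)^2 = 16/25 * a^2" by (simp add: power2_eq_square)
    moreover have "a^2 \<ge> 0" by simp
    ultimately show ?thesis using ake ae a by linarith
  next
    case False
    then have "e \<ge> a" using h by auto
    then have "e^2 \<ge> a^2" using a by (intro power_mono) auto
    moreover have "a*k*e \<ge> 0" using a \<open>e \<ge> a\<close> by simp
    ultimately show ?thesis by simp
  qed
  then show ?thesis using id by simp
qed

lemma real_part:
  fixes g d k :: nat and m :: nat
  assumes md: "m = g * d" and g1: "g \<ge> 1"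
    and h: "(g = 1 \<and> d \<ge> 2) \<or> (2^k * g \<le> d^(k+1) \<and> 2^(k+2) \<le> d+1 \<and> (k \<ge> 1 \<or> d \<ge> 4))"
  shows "real g \<le> real m * exp (- sqrt (ln 2 * ln (real m)))"
proof -
  define a where "a = ln (2::real)"
  define L where "L = ln (real d)"
  have a0: "a > 0" unfolding a_def by simp
  have d2: "d \<ge> 2"
  proof (cases "g = 1 \<and> d \<ge> 2")
    case False
    then have "2^(k+2) \<le> d+1" using h by auto
    moreover have "(2::nat)^(k+2) \<ge> 2^2" by (rule power_increasing) simp_all
    then have "(2::nat)^(k+2) \<ge> 4" by simp
    ultimately show ?thesis by linarith
  qed simp
  have dpos: "real d > 0" using d2 by simp
  have gpos: "real g > 0" using g1 by simp
  have La: "L \<ge> a" unfolding L_def a_def using d2 by simp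
  have lnm: "ln (real m) = ln (real g) + L" unfolding md L_def using dpos gpos by (simp add: ln_mult)
  have key: "a * ln (real m) \<le> L^2"
  proof (cases "g = 1 \<and> d \<ge> 2")
    case True
    then have "ln (real m) = L" using lnm by simp
    then show ?thesis using La a0 by (simp add: power2_eq_square mult_right_mono)
  next
    case False
    then have h1: "2^k * g \<le> d^(k+1)" and h2: "2^(k+2) \<le> d+1" and h3: "k \<ge> 1 \<or> d \<ge> 4" using h by auto
    have "real (2^k * g) \<le> real (d^(k+1))" using h1 by (simp only: of_nat_le_iff)
    then have "ln (real (2^k * g)) \<le> ln (real (d^(k+1)))" using gpos dpos by (subst ln_le_cancel_iff) auto
    then have "k * a + ln (real g) \<le> (k+1) * L" unfolding a_def L_def using gpos dpos
      by (simp add: ln_mult ln_realpow algebra_simps)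
    then have lm: "ln (real m) \<le> (k+2)*L - k*a" using lnm by (simp add: algebra_simps)
    define e where "e = L - (k+1)*a"
    have eL: "L = (k+1)*a + e" unfolding e_def by simp
    have ee: "(k \<ge> 1 \<and> 5*e \<ge> 4*a) \<or> e \<ge> a"
    proof (cases "k \<ge> 1")
      case True
      have "real (2^(k+2)) \<le> real (d+1)" using h2 by (simp only: of_nat_le_iff)
      then have "4 * 2^k \<le> real d + 1" by simp
      moreover have "(2::real)^k \<ge> 2" using True by (metis power_one_right power_increasing one_le_numeral)
      ultimately have "real d \<ge> (7/4) * 2^(k+1)" by simp
      then have "L \<ge> ln ((7/4) * 2^(k+1))" unfolding L_def using dpos by (subst ln_le_cancel_iff) auto
      moreover have "ln ((7/4) * (2::real)^(k+1)) = ln (7/4) + (k+1) * a"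
      proof -
        have p1: "ln ((2::real)^(k+1)) = (k+1)*ln 2" by (subst ln_realpow) simp_all
        have p2: "ln ((7/4) * (2::real)^(k+1)) = ln (7/4) + ln (2^(k+1))" by (subst ln_mult) simp_all
        show ?thesis unfolding a_def using p1 p2 by simp
      qed
      ultimately have "L \<ge> ln (7/4) + (k+1) * a" by simp
      then have "e \<ge> ln (7/4)" unfolding e_def by simp
      then show ?thesis using ln74 True unfolding a_def by simp
    next
      case False
      then have "k = 0" "d \<ge> 4" using h3 by auto
      then have "L \<ge> ln 4" unfolding L_def by simp
      moreover have "ln (4::real) = 2 * a" unfolding a_def using ln_realpow[of 2 2] by simp
      ultimately show ?thesis unfolding e_def using \<open>k = 0\<close> by simp
    qed
    have "a * ln (real m) \<le> a * ((k+2)*L - k*a)" using lm a0 by (simp add: mult_left_mono)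
    also have "\<dots> \<le> L^2" by (rule quad[OF a0 eL ee])
    finally show ?thesis .
  qed
  have L0: "L \<ge> 0" using La a0 by simp
  have "sqrt (ln 2 * ln (real m)) \<le> sqrt (L^2)" using key unfolding a_def by (rule real_sqrt_le_mono)
  also have "\<dots> = L" using L0 by simp
  finally have sL: "sqrt (ln 2 * ln (real m)) \<le> L" .
  have "exp (- L) \<le> exp (- sqrt (ln 2 * ln (real m)))" using sL by simp
  moreover have "exp (- L) = 1 / real d" unfolding L_def using dpos by (simp add: exp_minus inverse_eq_divide)
  ultimately have "1 / real d \<le> exp (- sqrt (ln 2 * ln (real m)))" by simp
  then have "real m * (1 / real d) \<le> real m * exp (- sqrt (ln 2 * ln (real m)))"
    by (intro mult_left_mono) auto
  moreover have "real m * (1 / real d) = real g" unfolding md using dpos by simp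
  ultimately show ?thesis by simp
qed


theorem lemma2p1:
  fixes m :: nat
  assumes "squarefree m" and "m > 1" and "m \<noteq> 6"
  shows "real (gcd m (totient m)) \<le> real m * exp (- sqrt (ln 2 * ln (real m)))"
proof -
  obtain g d where gd: "gcd m (totient m) = g" "m = g * d"
    "(g = 1 \<and> d \<ge> 2) \<or> (\<exists>k. 2^k * g \<le> d^(k+1) \<and> 2^(k+2) \<le> d+1 \<and> (k \<ge> 1 \<or> d \<ge> 4))"
    using nat_part[OF assms] by (elim exE conjE) (rule that, assumption+)
  have g1: "g \<ge> 1" using gd(2) assms(2) by (cases "g = 0") auto
  from gd(3) obtain k where "(g = 1 \<and> d \<ge> 2) \<or> (2^k * g \<le> d^(k+1) \<and> 2^(k+2) \<le> d+1 \<and> (k \<ge> 1 \<or> d \<ge> 4))"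
    by blast
  from real_part[OF gd(2) g1 this] show ?thesis using gd(1) by simp
qed

end
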